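(* For every $n\ge0$, $$\sum_{k=0}^n(-1)^kB_{n,k}=2^nE_n,$$ where $B_{n,k}=\sum_{j=0}^{n-k}(-1)^{n-k-j}\binom{n+1}{n-k-j}(2j+1)^n$ and $E_n$ are the Euler numbers defined by $\sum_{n\ge0}E_n\frac{z^n}{n!}=\frac{1}{\cosh z}$. *)

theory Defs
  imports "HOL-Computational_Algebra.Formal_Power_Series"
begin

definition fps_cosh :: "real fps" where
  "fps_cosh = (fps_exp 1 + fps_exp (-1)) / 2"

definition euler_num :: "nat \<Rightarrow> real" where
  "euler_num n = fact n * fps_nth (inverse fps_cosh) n"

definition B_coeff :: "nat \<Rightarrow> nat \<Rightarrow> int" where
  "B_coeff n k = (\<Sum>j=0..n-k. (-1)^(n-k-j) * int ((n+1) choose (n-k-j)) * (2*int j+1)^n)"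

end

theory Submission
  imports Defs
begin

lemma tri_swap: "(\<Sum>i=0..n. \<Sum>l=0..i. f i l) = (\<Sum>l=0..(n::nat). \<Sum>i=l..n. (f i l :: 'a::comm_monoid_add))"
proof (induction n)
  case 0 then show ?case by simp
next
  case (Suc n)
  have "(\<Sum>l=0..Suc n. \<Sum>i=l..Suc n. f i l) = (\<Sum>l=0..n. \<Sum>i=l..Suc n. f i l) + f (Suc n) (Suc n)"
    by simp
  also have "(\<Sum>l=0..n. \<Sum>i=l..Suc n. f i l) = (\<Sum>l=0..n. (\<Sum>i=l..n. f i l) + f (Suc n) l)"
    by (rule sum.cong) auto
  finally show ?case using Suc by (simp add: sum.distrib add.assoc)
qed

lemma pascal_sum: "(\<Sum>m=0..Suc d. Suc N choose m) = (\<Sum>m=0..Suc d. N choose m) + (\<Sum>m=0..d. N choose m)"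
  by (induction d) simp_all

lemma comb_id: "(\<Sum>m=0..d. (j+d+1) choose m) = (\<Sum>t=0..d. 2^(d-t) * ((j+t) choose j))"
proof (induction d)
  case 0 then show ?case by simp
next
  case (Suc d)
  have "(\<Sum>m=0..Suc d. (j+Suc d+1) choose m) = (\<Sum>m=0..Suc d. (j+d+1) choose m) + (\<Sum>m=0..d. (j+d+1) choose m)"
    using pascal_sum[where d=d and N="j+d+1"] by simp
  also have "\<dots> = 2 * (\<Sum>m=0..d. (j+d+1) choose m) + ((j+d+1) choose Suc d)"
    by simp
  also have "(j+d+1) choose Suc d = (j+d+1) choose j"
    using binomial_symmetric[of "Suc d" "j+d+1"] by simp
  also have "(\<Sum>t=0..Suc d. 2^(Suc d-t) * ((j+t) choose j)) = 2 * (\<Sum>t=0..d. 2^(d-t) * ((j+t) choose j)) + ((j+d+1) choose j)"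
    by (simp add: sum_distrib_left Suc_diff_le mult.assoc)
  ultimately show ?case using Suc by simp
qed

lemma pow_below: assumes "fps_nth (f::real fps) 0 = 0" shows "k < m \<Longrightarrow> fps_nth (f^m) k = 0"
proof (induction m arbitrary: k)
  case 0 then show ?case by simp
next
  case (Suc m)
  have "fps_nth (f^Suc m) k = (\<Sum>i=0..k. fps_nth f i * fps_nth (f^m) (k-i))" by (simp add: fps_mult_nth)
  also have "\<dots> = 0"
  proof (rule sum.neutral, clarify)
    fix i assume "i \<in> {0..k}"
    show "fps_nth f i * fps_nth (f^m) (k-i) = 0"
    proof (cases "i = 0")
      case True then show ?thesis using assms by simp
    next
      case False
      have "k - i < m" using False Suc.prems \<open>i \<in> {0..k}\<close> by auto
      then show ?thesis using Suc.IH[of "k-i"] by simp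
    qed
  qed
  finally show ?case .
qed


lemma tri_swap2: "(\<Sum>k=0..n. \<Sum>j=0..n-k. g k j) = (\<Sum>j=0..(n::nat). \<Sum>k=0..n-j. (g k j :: 'a::comm_monoid_add))"
proof -
  have A: "\<And>k. k \<le> n \<Longrightarrow> {0..n-k} = {j\<in>{0..n}. k+j \<le> n}" by auto
  have "(\<Sum>k=0..n. \<Sum>j=0..n-k. g k j) = (\<Sum>k=0..n. \<Sum>j=0..n. if k+j \<le> n then g k j else 0)"
  proof (rule sum.cong[OF refl])
    fix k assume "k \<in> {0..n}"
    then have "{0..n-k} = {j\<in>{0..n}. k+j \<le> n}" using A by simp
    then show "(\<Sum>j=0..n-k. g k j) = (\<Sum>j=0..n. if k+j \<le> n then g k j else 0)"
      by (simp only: sum.inter_filter[OF finite_atLeastAtMost])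
  qed
  also have "\<dots> = (\<Sum>j=0..n. \<Sum>k=0..n. if k+j \<le> n then g k j else 0)"
    by (rule sum.swap)
  also have "\<dots> = (\<Sum>j=0..n. \<Sum>k=0..n-j. g k j)"
  proof (rule sum.cong[OF refl])
    fix j assume "j \<in> {0..n}"
    then have "{0..n-j} = {k\<in>{0..n}. k+j \<le> n}" by auto
    then show "(\<Sum>k=0..n. if k+j \<le> n then g k j else 0) = (\<Sum>k=0..n-j. g k j)"
      by (simp only: sum.inter_filter[OF finite_atLeastAtMost])
  qed
  finally show ?thesis .
qed

lemma sum_shift_id: "j \<le> n \<Longrightarrow> (\<Sum>t=0..n-j. 2^(n-j-t) * ((j+t) choose j)) = (\<Sum>i=j..n. 2^(n-i) * (i choose j) :: nat)"
proof -
  assume "j \<le> n"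
  have "(\<Sum>i=j..n. 2^(n-i) * (i choose j) :: nat) = (\<Sum>i=0+j..(n-j)+j. 2^(n-i) * (i choose j))"
    using \<open>j \<le> n\<close> by simp
  also have "\<dots> = (\<Sum>t=0..n-j. 2^(n-(t+j)) * ((t+j) choose j))"
    by (rule sum.shift_bounds_cl_nat_ivl)
  finally show ?thesis by (simp add: add.commute)
qed

lemma inner_j:
  assumes "j \<le> n"
  shows "(\<Sum>k=0..n-j. (-1)^k * ((-1)^(n-k-j) * int ((n+1) choose (n-k-j)) * (2*int j+1)^n))
    = (-1)^(n+j) * (2*int j+1)^n * int (\<Sum>i=j..n. 2^(n-i) * (i choose j))"
proof -
  have "(\<Sum>k=0..n-j. (-1)^k * ((-1)^(n-k-j) * int ((n+1) choose (n-k-j)) * (2*int j+1)^n))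
     = (\<Sum>k=0..n-j. (-1)^(n+j) * (2*int j+1)^n * int ((n+1) choose (n-j-k)))"
  proof (rule sum.cong[OF refl])
    fix k assume "k \<in> {0..n-j}"
    then have "(-1::int)^k * (-1)^(n-k-j) = (-1)^(n+j)"
    proof -
      assume k: "k \<in> {0..n-j}"
      have "(-1::int)^k * (-1)^(n-k-j) = (-1)^(k + (n-k-j))" by (simp add: power_add)
      also have "k + (n-k-j) = n-j" using k assms by auto
      also have "(-1::int)^(n-j) = (-1)^(n+j)"
      proof -
        have e: "n+j = (n-j) + 2*j" using assms by simp
        show ?thesis by (subst e) (simp add: power_add power_mult)
      qed
      finally show ?thesis .
    qed
    then show "(-1)^k * ((-1)^(n-k-j) * int ((n+1) choose (n-k-j)) * (2*int j+1)^n)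
       = (-1)^(n+j) * (2*int j+1)^n * int ((n+1) choose (n-j-k))"
      by (simp add: algebra_simps)
  qed
  also have "\<dots> = (-1)^(n+j) * (2*int j+1)^n * int (\<Sum>k=0..n-j. (n+1) choose (n-j-k))"
    by (simp add: sum_distrib_left)
  also have "(\<Sum>k=0..n-j. (n+1) choose (n-j-k)) = (\<Sum>m=0..n-j. (n+1) choose m)"
    by (subst sum.atLeastAtMost_rev) simp
  also have "\<dots> = (\<Sum>m=0..n-j. (j+(n-j)+1) choose m)" using assms by simp
  also have "\<dots> = (\<Sum>t=0..n-j. 2^(n-j-t) * ((j+t) choose j))" by (rule comb_id)
  also have "\<dots> = (\<Sum>i=j..n. 2^(n-i) * (i choose j))" by (rule sum_shift_id[OF assms])
  finally show ?thesis .
qed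

lemma lhs_form: "(\<Sum>k=0..n. (-1)^k * B_coeff n k) = (\<Sum>j=0..n. (-1)^(n+j) * (2*int j+1)^n * int (\<Sum>i=j..n. 2^(n-i) * (i choose j)))"
proof -
  have "(\<Sum>k=0..n. (-1)^k * B_coeff n k) = (\<Sum>k=0..n. \<Sum>j=0..n-k. (-1)^k * ((-1)^(n-k-j) * int ((n+1) choose (n-k-j)) * (2*int j+1)^n))"
    by (simp add: B_coeff_def sum_distrib_left)
  also have "\<dots> = (\<Sum>j=0..n. \<Sum>k=0..n-j. (-1)^k * ((-1)^(n-k-j) * int ((n+1) choose (n-k-j)) * (2*int j+1)^n))"
    by (rule tri_swap2)
  also have "\<dots> = (\<Sum>j=0..n. (-1)^(n+j) * (2*int j+1)^n * int (\<Sum>i=j..n. 2^(n-i) * (i choose j)))"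
    by (rule sum.cong[OF refl]) (rule inner_j, simp)
  finally show ?thesis .
qed


lemma const_aux: "(of_nat k * (-1)^m :: real fps) = fps_const (real k * (-1)^m)"
proof -
  have "fps_const (real k * (-1)^m) = fps_const (real k) * (fps_const (-1))^m" by simp
  moreover have "fps_const (-1::real) = -1" using fps_const_neg[of "1::real"] by simp
  ultimately show ?thesis by (simp add: fps_of_nat)
qed

lemma termi: "fps_exp (-1::real) * (fps_const (-1/2) * (fps_exp (-2) - 1))^i
   = (\<Sum>l\<le>i. fps_const ((-1/2)^i * real (i choose l) * (-1)^(i-l)) * fps_exp (-(2*real l+1)))"
proof -
  have "(fps_exp (-2::real) - 1)^i = (fps_exp (-2) + (-1))^i" by simp
  also have "\<dots> = (\<Sum>l\<le>i. of_nat (i choose l) * fps_exp (-2) ^ l * (-1) ^ (i - l))"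
    by (rule binomial_ring)
  also have "\<dots> = (\<Sum>l\<le>i. fps_const (real (i choose l) * (-1) ^ (i - l)) * fps_exp (real l * (-2)))"
  proof (rule sum.cong[OF refl])
    fix l
    have "(of_nat (i choose l) * fps_exp (-2) ^ l * (-1) ^ (i - l) :: real fps)
       = (of_nat (i choose l) * (-1)^(i-l)) * fps_exp (-2) ^ l" by (simp add: mult_ac)
    also have "\<dots> = fps_const (real (i choose l) * (-1) ^ (i - l)) * fps_exp (real l * (-2))"
      by (simp only: const_aux fps_exp_power_mult)
    finally show "(of_nat (i choose l) * fps_exp (-2) ^ l * (-1) ^ (i - l) :: real fps)
       = fps_const (real (i choose l) * (-1) ^ (i - l)) * fps_exp (real l * (-2))" .
  qed
  finally have X: "(fps_exp (-2::real) - 1)^i = \<dots>" .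
  have "fps_exp (-1::real) * (fps_const (-1/2) * (fps_exp (-2) - 1))^i
     = fps_const ((-1/2)^i) * (fps_exp (-1) * (fps_exp (-2::real) - 1)^i)"
    by (simp add: power_mult_distrib fps_const_power)
  also have "\<dots> = (\<Sum>l\<le>i. fps_const ((-1/2)^i) * (fps_const (real (i choose l) * (-1) ^ (i - l)) * (fps_exp (-1) * fps_exp (real l * (-2)))))"
    unfolding X by (simp add: sum_distrib_left mult.assoc mult.left_commute)
  also have "\<dots> = (\<Sum>l\<le>i. fps_const ((-1/2)^i * real (i choose l) * (-1)^(i-l)) * fps_exp (-(2*real l+1)))"
  proof (rule sum.cong[OF refl])
    fix l
    have "fps_exp (-1::real) * fps_exp (real l * (-2)) = fps_exp (-(2*real l+1))"
      by (simp add: fps_exp_add_mult[symmetric] algebra_simps)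
    then show "fps_const ((-1/2)^i) * (fps_const (real (i choose l) * (-1) ^ (i - l)) * (fps_exp (-1) * fps_exp (real l * (-2))))
       = fps_const ((-1/2)^i * real (i choose l) * (-1)^(i-l)) * fps_exp (-(2*real l+1))"
      by (simp add: mult.assoc[symmetric])
  qed
  finally show ?thesis .
qed


lemma sign_aux: "l \<le> i \<Longrightarrow> (-1::real)^i * (-1)^(i-l) = (-1)^l"
proof -
  assume "l \<le> i"
  then have e: "i + (i - l) = l + 2*(i-l)" by simp
  show ?thesis by (simp add: power_add[symmetric] e power_add power_mult)
qed

lemma alg_aux: "(b::real) \<noteq> 0 \<Longrightarrow> s1 * s2 = s3 \<Longrightarrow> q = s1 / b \<Longrightarrow> r = m * A \<Longrightarrow>
   (c * b) * (q * C * s2 * r) = (m * s3) * A * c * C"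
proof -
  assume "b \<noteq> 0" "s1 * s2 = s3" "q = s1 / b" "r = m * A"
  then show ?thesis by (simp add: field_simps) (metis mult.commute mult.left_commute)
qed

lemma euler_formula:
  "2^n * euler_num n = (\<Sum>i=0..n. \<Sum>l=0..i. (-1)^(n+l) * (2*real l+1)^n * 2^(n-i) * real (i choose l))"
proof -
  define Y where "Y = fps_const (1/2) * (fps_exp (-2) - (1::real fps))"
  have Y0: "fps_nth Y 0 = 0" by (simp add: Y_def)
  have mY0: "fps_nth (-Y) 0 = 0" using Y0 by simp
  have e12: "fps_exp (1::real) * fps_exp (-2) = fps_exp (-1)"
    using fps_exp_add_mult[of "1::real" "-2"] by simp
  have h1: "fps_cosh = fps_exp 1 * (1 + Y)"
  proof -
    have "fps_exp 1 * (1 + Y) = fps_const (1/2) * (fps_exp 1 + fps_exp (1::real) * fps_exp (-2))"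
      by (simp add: Y_def algebra_simps fps_const_add[symmetric] fps_numeral_fps_const)
    also have "\<dots> = fps_const (1/2) * (fps_exp 1 + fps_exp (-1))" by (simp add: e12)
    finally show ?thesis by (simp add: fps_cosh_def fps_numeral_fps_const mult.commute)
  qed
  have Y1: "fps_nth (1 + Y) 0 \<noteq> 0" using Y0 by simp
  have h2: "inverse fps_cosh = fps_exp (-1) * inverse (1 + Y)"
    by (simp add: h1 fps_inverse_mult fps_exp_neg)
  define P where "P = (\<Sum>i=0..n. (-Y)^i)"
  have hP: "(1 + Y) * P = 1 - (-Y)^(n+1)"
    using sum_gp_multiplied[of 0 n "-Y"] by (simp add: P_def)
  have hinv: "inverse (1 + Y) = P + inverse (1 + Y) * (-Y)^(n+1)"
  proof -
    have "inverse (1 + Y) = inverse (1 + Y) * ((1 + Y) * P + (-Y)^(n+1))" using hP by simp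
    also have "\<dots> = (inverse (1 + Y) * (1 + Y)) * P + inverse (1 + Y) * (-Y)^(n+1)"
      by (simp add: algebra_simps)
    also have "inverse (1 + Y) * (1 + Y) = 1" using inverse_mult_eq_1[OF Y1] .
    finally show ?thesis by simp
  qed
  have coef: "\<And>k. k \<le> n \<Longrightarrow> fps_nth (inverse (1 + Y)) k = fps_nth P k"
  proof -
    fix k assume k: "k \<le> n"
    have "fps_nth (inverse (1 + Y) * (-Y)^(n+1)) k = 0"
      unfolding fps_mult_nth
    proof (rule sum.neutral, rule ballI)
      fix i assume "i \<in> {0..k}"
      have "fps_nth ((-Y)^(n+1)) (k-i) = 0" by (rule pow_below[OF mY0]) (use k in arith)
      then show "fps_nth (inverse (1 + Y)) i * fps_nth ((-Y)^(n+1)) (k-i) = 0" by (simp only: mult_zero_right)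
    qed
    then show "fps_nth (inverse (1 + Y)) k = fps_nth P k"
      by (subst hinv) simp
  qed
  have "fps_nth (inverse fps_cosh) n = fps_nth (fps_exp (-1) * P) n"
    unfolding h2 fps_mult_nth by (rule sum.cong[OF refl]) (simp add: coef)
  also have "fps_exp (-1) * P = (\<Sum>i=0..n. fps_exp (-1) * (fps_const (-1/2) * (fps_exp (-2) - 1))^i)"
  proof -
    have mY: "-Y = fps_const (-1/2) * (fps_exp (-2) - 1)"
      unfolding Y_def by (simp only: minus_mult_left fps_const_neg) simp
    show ?thesis unfolding P_def mY by (simp only: sum_distrib_left)
  qed
  also have "\<dots> = (\<Sum>i=0..n. \<Sum>l\<le>i. fps_const ((-1/2)^i * real (i choose l) * (-1)^(i-l)) * fps_exp (-(2*real l+1)))"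
    by (simp only: termi)
  finally have "fps_nth (inverse fps_cosh) n = (\<Sum>i=0..n. \<Sum>l\<le>i. (-1/2)^i * real (i choose l) * (-1)^(i-l) * ((-(2*real l+1))^n / fact n))"
    by (simp add: fps_sum_nth)
  then have "euler_num n = (\<Sum>i=0..n. \<Sum>l\<le>i. (-1/2)^i * real (i choose l) * (-1)^(i-l) * (-(2*real l+1))^n)"
    by (simp add: euler_num_def sum_distrib_left)
  then have "2^n * euler_num n = (\<Sum>i=0..n. \<Sum>l=0..i. 2^n * ((-1/2)^i * real (i choose l) * (-1)^(i-l) * (-(2*real l+1))^n))"
    by (simp add: sum_distrib_left atMost_atLeast0)
  also have "\<dots> = (\<Sum>i=0..n. \<Sum>l=0..i. (-1)^(n+l) * (2*real l+1)^n * 2^(n-i) * real (i choose l))"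
  proof (intro sum.cong refl)
    fix i l assume i: "i \<in> {0..n}" and l: "l \<in> {0..i}"
    have p2: "(2::real)^n = 2^(n-i) * 2^i" using i by (simp flip: power_add)
    have f1: "(-1/2::real)^i = (-1)^i / 2^i" by (simp only: minus_divide_left power_divide)
    have f2: "(-(2*real l+1))^n = (-1)^n * (2*real l+1)^n" by (rule power_minus)
    have f3: "(-1::real)^i * (-1)^(i-l) = (-1)^l" using l by (simp add: sign_aux)
    show "2^n * ((-1/2)^i * real (i choose l) * (-1)^(i-l) * (-(2*real l+1))^n)
        = (-1)^(n+l) * (2*real l+1)^n * 2^(n-i) * real (i choose l)"
      unfolding p2 power_add by (rule alg_aux[OF _ f3 f1 f2]) simp
  qed
  finally show ?thesis .
qed


theorem corollary6p2:
  fixes n :: nat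
  shows "real_of_int (\<Sum>k=0..n. (-1)^k * B_coeff n k) = 2^n * euler_num n"
proof -
  have "real_of_int (\<Sum>k=0..n. (-1)^k * B_coeff n k)
     = real_of_int (\<Sum>j=0..n. (-1)^(n+j) * (2*int j+1)^n * int (\<Sum>i=j..n. 2^(n-i) * (i choose j)))"
    by (simp only: lhs_form)
  also have "\<dots> = (\<Sum>j=0..n. \<Sum>i=j..n. (-1)^(n+j) * (2*real j+1)^n * 2^(n-i) * real (i choose j))"
    by (simp add: sum_distrib_left mult.assoc)
  also have "\<dots> = (\<Sum>i=0..n. \<Sum>l=0..i. (-1)^(n+l) * (2*real l+1)^n * 2^(n-i) * real (i choose l))"
    by (rule tri_swap[symmetric])
  also have "\<dots> = 2^n * euler_num n" by (rule euler_formula[symmetric])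
  finally show ?thesis .
qed

end
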